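(* Let $\mathcal{X} \subseteq \mathbb{R}^m$ be countable, let $\Theta = \{\theta_1,\dots,\theta_C\}$ with $C \ge 2$, let $p(\cdot\mid\theta_i)$, $i \in [C]$, be probability mass functions on $\mathcal{X}$, let $\pi = (\pi_1,\dots,\pi_C)$ be a prior probability vector, let $\mathcal{Q}$ be a subset of the $C$-dimensional probability simplex, and fix an observation $x \in \mathcal{X}$. Suppose that for every $i \in [C]$ we have $N_i$ i.i.d. samples $\widehat x_{ij}$, $j \in [N_i]$, from $p(\cdot\mid\theta_i)$, and let $\widehat\nu_i^{N_i} = N_i^{-1}\sum_{j=1}^{N_i} \delta_{\widehat x_{ij}}$ be the empirical distribution. For $\varepsilon_i > 0$ let $\mathbb{B}_i^{N_i} = \mathbb{B}_{\mathrm{KL}}(\widehat\nu_i^{N_i},\varepsilon_i) = \{\nu \in \mathcal{M}(\mathcal{X}) : \mathrm{KL}(\widehat\nu_i^{N_i}\parallel\nu) \le \varepsilon_i\}$. Define $$\mathcal{J}^{\mathrm{true}} = \min_{q \in \mathcal{Q}} \sum_{i=1}^C q_i(\log q_i - \log\pi_i) - \sum_{i=1}^C q_i \log p(x\mid\theta_i),$$ $$\widehat{\mathcal{J}}_{\mathbb{B}^N} = \min_{q \in \mathcal{Q}} \sum_{i=1}^C q_i(\log q_i - \log\pi_i) - \sum_{i=1}^C q_i \log\Big(\sup_{\nu_i \in \mathbb{B}_i^{N_i}} \nu_i(x)\Big),$$ and set $n = \min\{N_1,\dots,N_C\}$. Then $$\limsup_{n\to\infty} \frac1n \log \mathbb{P}^\infty\big(\mathcal{J}^{\mathrm{true}}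 < \widehat{\mathcal{J}}_{\mathbb{B}^N}\big) \le -\min_{i \in [C]} \varepsilon_i < 0.$$
   Context: $\mathcal{M}(\mathcal{X})$ is the set of probability mass functions on $\mathcal{X}$; $\delta_z$ is the Dirac measure at $z$; $[C] = \{1,\dots,C\}$. For $\nu_1 \ll \nu_2$, $\mathrm{KL}(\nu_1\parallel\nu_2) = \sum_{z\in\mathcal{X}} f(\nu_1(z)/\nu_2(z))\nu_2(z)$ with $f(t) = t\log t - t + 1$. $\mathbb{P}^\infty$ denotes the probability with respect to the (infinite) i.i.d. sampling of the training data. *)

theory Defs
  imports "HOL-Probability.Probability"
begin

text \<open>f(t) = t log t - t + 1 (with 0 log 0 = 0).\<close>
definition kl_f :: "real \<Rightarrow> real" where
  "kl_f t = t * ln t - t + 1"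

definition KL :: "'x set \<Rightarrow> 'x pmf \<Rightarrow> 'x pmf \<Rightarrow> ennreal" where
  "KL X nu1 nu2 =
     (if (\<forall>z\<in>X. pmf nu2 z = 0 \<longrightarrow> pmf nu1 z = 0)
      then (\<Sum>\<^sub>\<infinity>z\<in>X. ennreal (kl_f (pmf nu1 z / pmf nu2 z) * pmf nu2 z))
      else \<infinity>)"

definition KL_ball :: "'x set \<Rightarrow> 'x pmf \<Rightarrow> real \<Rightarrow> 'x pmf set" where
  "KL_ball X nuhat eps = {nu. set_pmf nu \<subseteq> X \<and> KL X nuhat nu \<le> ennreal eps}"

definition empirical :: "nat \<Rightarrow> (nat \<Rightarrow> 'x) \<Rightarrow> 'x pmf" where
  "empirical N s = map_pmf s (pmf_of_set {..<N})"

definition elog :: "real \<Rightarrow> ereal" where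
  "elog t = (if t \<le> 0 then -\<infinity> else ereal (ln t))"

text \<open>min over q in Q of sum_i q_i (log q_i - log pi_i) - sum_i q_i log w_i,
  in extended reals with 0 log 0 = 0 and 0 * infinity = 0.\<close>
definition Jobj :: "nat \<Rightarrow> (nat \<Rightarrow> real) set \<Rightarrow> (nat \<Rightarrow> real) \<Rightarrow> (nat \<Rightarrow> real) \<Rightarrow> ereal" where
  "Jobj C Q prior w = (INF q\<in>Q. \<Sum>i\<in>{1..C}.
      ereal (q i * ln (q i)) - ereal (q i) * elog (prior i) - ereal (q i) * elog (w i))"

definition sample_pmf :: "nat \<Rightarrow> (nat \<Rightarrow> nat) \<Rightarrow> (nat \<Rightarrow> 'x pmf) \<Rightarrow> 'x \<Rightarrow> (nat \<Rightarrow> nat \<Rightarrow> 'x) pmf" where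
  "sample_pmf C N p dflt =
     Pi_pmf {1..C} (\<lambda>_. dflt) (\<lambda>i. Pi_pmf {..<N i} dflt (\<lambda>_. p i))"

end

theory Submission
  imports Defs "HOL-Real_Asymp.Real_Asymp"
begin


lemma kl_f_nonneg: assumes "t \<ge> 0" shows "kl_f t \<ge> 0"
proof (cases "t = 0")
  case True then show ?thesis by (simp add: kl_f_def)
next
  case False
  hence tp: "t > 0" using assms by simp
  have "ln (1/t) \<le> 1/t - 1" using tp by (intro ln_le_minus_one) simp
  hence "- ln t \<le> 1/t - 1" using tp by (simp add: ln_div)
  hence "t * (- ln t) \<le> t * (1/t - 1)" using tp by (intro mult_left_mono) auto
  thus ?thesis using tp by (simp add: kl_f_def algebra_simps)
qed

lemma infsum_pmf_ennreal:
  "infsum (\<lambda>z. ennreal (pmf p z)) A = ennreal (measure p A)"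
proof -
  have sm: "pmf p summable_on A"
    by (rule Infinite_Sum.abs_summable_summable) (use abs_summable_equivalent pmf_abs_summable in blast)
  have "infsum (ennreal \<circ> pmf p) A = ennreal (infsum (pmf p) A)"
    using sm by (intro infsum_comm_additive_general[where f=ennreal and g="pmf p" and S=A])
       (auto simp: sum_ennreal intro!: continuous_intros)
  also have "infsum (pmf p) A = measure p A"
    by (simp add: measure_pmf_conv_infsetsum infsetsum_infsum pmf_abs_summable)
  finally show ?thesis by (simp add: o_def)
qed

lemma infsum_pmf_ennreal_c:
  assumes "c \<ge> 0"
  shows "infsum (\<lambda>z. ennreal (c * pmf p z)) A = ennreal (c * measure p A)"
proof -
  have sm: "pmf p summable_on A"
    by (rule Infinite_Sum.abs_summable_summable) (use abs_summable_equivalent pmf_abs_summable in blast)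
  hence sm2: "(\<lambda>z. c * pmf p z) summable_on A" by (rule summable_on_cmult_right)
  have "infsum (ennreal \<circ> (\<lambda>z. c * pmf p z)) A = ennreal (infsum (\<lambda>z. c * pmf p z) A)"
    using sm2 assms by (intro infsum_comm_additive_general[where f=ennreal and g="(\<lambda>z. c * pmf p z)" and S=A])
       (auto simp: sum_ennreal intro!: continuous_intros)
  also have "infsum (\<lambda>z. c * pmf p z) A = c * infsum (pmf p) A"
    by (rule infsum_cmult_right') 
  also have "infsum (pmf p) A = measure p A"
    by (simp add: measure_pmf_conv_infsetsum infsetsum_infsum pmf_abs_summable)
  finally show ?thesis by (simp add: o_def)
qed

lemma KL_self: "KL X p p = 0"
proof -
  have "\<And>z. ennreal (kl_f (pmf p z / pmf p z) * pmf p z) = 0"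
    by (case_tac "pmf p z = 0") (auto simp: kl_f_def)
  thus ?thesis unfolding KL_def by simp
qed

lemma witness:
  fixes q :: "'x pmf"
  assumes sq: "set_pmf q \<subseteq> X" and xX: "x \<in> X" and ab: "pmf q x < b" and b1: "b < 1"
    and kl: "pmf q x * ln (pmf q x / b) + (1 - pmf q x) * ln ((1 - pmf q x)/(1-b)) \<le> eps"
  shows "\<exists>\<nu>\<in>KL_ball X q eps. b \<le> pmf \<nu> x"
proof -
  define a where "a = pmf q x"
  have a0: "a \<ge> 0" by (simp add: a_def)
  have b0: "b > 0" using ab a0 unfolding a_def by linarith
  have a1: "a < 1" using ab b1 a_def by simp
  define S where "S = {z. z \<noteq> x}"
  have mS: "measure q S = 1 - a"
    using measure_pmf.prob_compl[of "{x}" q] by (simp add: S_def a_def measure_pmf_single Compl_eq_Diff_UNIV[symmetric] Compl_eq)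
  have ne: "set_pmf q \<inter> S \<noteq> {}"
    using mS a1 measure_pmf_zero_iff[of q S] by auto
  have pc: "pmf (cond_pmf q S) z = (if z \<noteq> x then pmf q z / (1 - a) else 0)" for z
    using pmf_cond[OF ne, of z] mS by (simp add: S_def)
  define \<nu> where "\<nu> = bind_pmf (bernoulli_pmf b) (\<lambda>c. if c then return_pmf x else cond_pmf q S)"
  have pv: "pmf \<nu> z = (if z = x then b else (1 - b) * pmf q z / (1 - a))" for z
    using b0 b1 unfolding \<nu>_def pmf_bind
    by (subst integral_bernoulli_pmf) (auto simp: pc pmf_return)
  have sv: "set_pmf \<nu> \<subseteq> X"
  proof
    fix z assume "z \<in> set_pmf \<nu>"
    hence "pmf \<nu> z \<noteq> 0" by (simp add: set_pmf_iff)
    hence "z = x \<or> pmf q z \<noteq> 0" by (auto simp: pv split: if_splits)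
    thus "z \<in> X" using xX sq by (auto simp: set_pmf_iff)
  qed
  have ac: "\<forall>z\<in>X. pmf \<nu> z = 0 \<longrightarrow> pmf q z = 0"
    using b0 b1 a1 by (auto simp: pv split: if_splits)
  define r where "r = (1 - a) / (1 - b)"
  have r0: "r \<ge> 0" using a1 b1 by (simp add: r_def)
  define c where "c = kl_f r * (1 - b) / (1 - a)"
  have c0: "c \<ge> 0" using kl_f_nonneg[OF r0] a1 b1 by (simp add: c_def)
  have tm: "ennreal (kl_f (pmf q z / pmf \<nu> z) * pmf \<nu> z) = ennreal (c * pmf q z)" if "z \<noteq> x" for z
  proof (cases "pmf q z = 0")
    case True thus ?thesis using that by (simp add: pv)
  next
    case False
    have "pmf q z / pmf \<nu> z = r" using that False a1 b1 by (simp add: pv r_def field_simps)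
    moreover have "kl_f r * pmf \<nu> z = c * pmf q z" using that a1 b1 by (simp add: pv c_def field_simps)
    ultimately show ?thesis by simp
  qed
  have "KL X q \<nu> = (\<Sum>\<^sub>\<infinity>z\<in>insert x (X - {x}). ennreal (kl_f (pmf q z / pmf \<nu> z) * pmf \<nu> z))"
    unfolding KL_def using ac xX by (simp add: insert_absorb)
  also have "\<dots> = ennreal (kl_f (pmf q x / pmf \<nu> x) * pmf \<nu> x) + (\<Sum>\<^sub>\<infinity>z\<in>X - {x}. ennreal (kl_f (pmf q z / pmf \<nu> z) * pmf \<nu> z))"
    apply (rule infsum_insert)
    by (auto intro: nonneg_summable_on_complete)
  also have "\<dots> = ennreal (kl_f (a / b) * b) + (\<Sum>\<^sub>\<infinity>z\<in>X - {x}. ennreal (c * pmf q z))"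
    by (intro arg_cong2[where f="(+)"] infsum_cong) (auto simp: tm pv[of x] a_def)
  also have "\<dots> = ennreal (kl_f (a / b) * b) + ennreal (c * measure q (X - {x}))"
    using c0 by (simp add: infsum_pmf_ennreal_c)
  also have "\<dots> \<le> ennreal (kl_f (a / b) * b) + ennreal (c * (1 - a))"
  proof -
    have "measure q (X - {x}) \<le> measure q S" unfolding S_def
      by (intro measure_pmf.finite_measure_mono) auto
    thus ?thesis using c0 mS by (intro add_left_mono ennreal_leI mult_left_mono) auto
  qed
  also have "\<dots> = ennreal (kl_f (a / b) * b + c * (1 - a))"
    using kl_f_nonneg[of "a/b"] a0 b0 c0 a1 by (intro ennreal_plus[symmetric]) auto
  also have "kl_f (a / b) * b + c * (1 - a) = a * ln (a / b) + (1 - a) * ln r"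
  proof -
    have e1: "kl_f (a / b) * b = a * ln (a / b) - a + b" using b0 by (simp add: kl_f_def field_simps)
    have e2: "c * (1 - a) = kl_f r * (1 - b)" using a1 by (simp add: c_def)
    have e3: "kl_f r * (1 - b) = (1 - a) * ln r - (1 - a) + (1 - b)"
    proof -
      have "r * (1 - b) = 1 - a" using b1 by (simp add: r_def)
      moreover have "kl_f r * (1 - b) = (r * (1 - b)) * ln r - r * (1 - b) + (1 - b)"
        by (simp add: kl_f_def algebra_simps)
      ultimately show ?thesis by simp
    qed
    show ?thesis using e1 e2 e3 by simp
  qed
  also have "\<dots> \<le> eps" using kl by (simp add: a_def r_def)
  finally have "KL X q \<nu> \<le> ennreal eps" by (simp add: ennreal_leI)
  hence "\<nu> \<in> KL_ball X q eps" using sv by (simp add: KL_ball_def)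
  moreover have "b \<le> pmf \<nu> x" by (simp add: pv)
  ultimately show ?thesis by blast
qed

definition klb :: "real \<Rightarrow> real \<Rightarrow> real" where
  "klb a b = a * ln (a / b) + (1 - a) * ln ((1 - a) / (1 - b))"

lemma sup_ge:
  fixes q :: "'x pmf"
  assumes sq: "set_pmf q \<subseteq> X" and xX: "x \<in> X" and e0: "eps \<ge> 0"
    and nb: "\<not> (pmf q x < b \<and> (b \<ge> 1 \<or> klb (pmf q x) b > eps))"
  shows "b \<le> Sup ((\<lambda>\<nu>. pmf \<nu> x) ` KL_ball X q eps)"
proof -
  have bdd: "bdd_above ((\<lambda>\<nu>. pmf \<nu> x) ` KL_ball X q eps)"
    by (rule bdd_aboveI[where M=1]) (auto simp: pmf_le_1)
  have "\<exists>\<nu>\<in>KL_ball X q eps. b \<le> pmf \<nu> x"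
  proof (cases "b \<le> pmf q x")
    case True
    have "q \<in> KL_ball X q eps" using sq by (simp add: KL_ball_def KL_self)
    thus ?thesis using True by blast
  next
    case False
    thus ?thesis using nb by (intro witness[OF sq xX]) (auto simp: klb_def)
  qed
  then obtain \<nu> where "\<nu> \<in> KL_ball X q eps" "b \<le> pmf \<nu> x" by blast
  thus ?thesis using bdd by (intro cSup_upper2[of "pmf \<nu> x"]) auto
qed

lemma elog_mono: "s \<le> t \<Longrightarrow> elog s \<le> elog t"
  by (auto simp: elog_def)

lemma Jobj_anti:
  assumes Qp: "\<And>q i. q \<in> Q \<Longrightarrow> i \<in> {1..C} \<Longrightarrow> q i \<ge> 0"
    and le: "\<And>i. i \<in> {1..C} \<Longrightarrow> w i \<le> w' i"
  shows "Jobj C Q prior w' \<le> Jobj C Q prior w"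
  unfolding Jobj_def
proof (rule INF_mono)
  fix q assume q: "q \<in> Q"
  have "(\<Sum>i\<in>{1..C}. ereal (q i * ln (q i)) - ereal (q i) * elog (prior i) - ereal (q i) * elog (w' i))
     \<le> (\<Sum>i\<in>{1..C}. ereal (q i * ln (q i)) - ereal (q i) * elog (prior i) - ereal (q i) * elog (w i))"
  proof (rule sum_mono)
    fix i assume i: "i \<in> {1..C}"
    show "ereal (q i * ln (q i)) - ereal (q i) * elog (prior i) - ereal (q i) * elog (w' i)
       \<le> ereal (q i * ln (q i)) - ereal (q i) * elog (prior i) - ereal (q i) * elog (w i)"
      using Qp[OF q i] le[OF i]
      by (intro ereal_minus_mono order.refl ereal_mult_left_mono elog_mono) auto
  qed
  thus "\<exists>n\<in>Q. (\<Sum>i\<in>{1..C}. ereal (n i * ln (n i)) - ereal (n i) * elog (prior i) - ereal (n i) * elog (w' i))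
     \<le> (\<Sum>i\<in>{1..C}. ereal (q i * ln (q i)) - ereal (q i) * elog (prior i) - ereal (q i) * elog (w i))"
    using q by blast
qed

lemma types_le_1:
  assumes "t \<ge> 0" "t \<le> (1::real)" "k \<le> N"
  shows "real (N choose k) * t ^ k * (1 - t) ^ (N - k) \<le> 1"
proof -
  have "(\<Sum>j\<le>N. real (N choose j) * t ^ j * (1 - t) ^ (N - j)) = (t + (1 - t)) ^ N"
    by (subst binomial_ring) simp
  also have "\<dots> = 1" by simp
  finally have s1: "(\<Sum>j\<le>N. real (N choose j) * t ^ j * (1 - t) ^ (N - j)) = 1" .
  have "real (N choose k) * t ^ k * (1 - t) ^ (N - k) \<le> (\<Sum>j\<le>N. real (N choose j) * t ^ j * (1 - t) ^ (N - j))"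
    using assms by (intro member_le_sum) auto
  thus ?thesis using s1 by simp
qed

lemma pow_exp_aux:
  fixes t b :: real
  assumes "t \<ge> 0" "b > 0" "t = 0 \<Longrightarrow> k = 0"
  shows "t ^ k * exp (- ln (t / b)) ^ k = b ^ k"
proof (cases "k = 0")
  case True thus ?thesis by simp
next
  case False
  hence tp: "t > 0" using assms by (cases "t = 0") auto
  have "exp (- ln (t / b)) = b / t" using tp assms by (simp add: exp_minus exp_ln)
  hence "t * exp (- ln (t / b)) = b" using tp by simp
  thus ?thesis by (metis power_mult_distrib)
qed

lemma binom_bound:
  assumes b0: "0 < b" and b1: "b < 1" and kN: "k \<le> N" and N0: "N > 0"
    and kl: "klb (real k / real N) b > eps"
  shows "real (N choose k) * b ^ k * (1 - b) ^ (N - k) \<le> exp (- real N * eps)"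
proof -
  define t where "t = real k / real N"
  have t0: "t \<ge> 0" and t1: "t \<le> 1" using kN N0 by (auto simp: t_def)
  define A where "A = ln (t / b)"
  define B where "B = ln ((1 - t) / (1 - b))"
  have Nt: "real N * t = real k" using N0 by (simp add: t_def)
  have Nt1: "real N * (1 - t) = real (N - k)" using N0 kN by (simp add: t_def algebra_simps of_nat_diff)
  have NK: "real N * klb t b = real k * A + real (N - k) * B"
    unfolding klb_def A_def B_def
    by (simp add: distrib_left mult.assoc[symmetric] Nt Nt1)
  have "exp (- (real N * klb t b)) = exp (- A) ^ k * exp (- B) ^ (N - k)"
    unfolding NK by (simp add: exp_add[symmetric] exp_of_nat_mult[symmetric] algebra_simps)
  hence E: "t ^ k * (1 - t) ^ (N - k) * exp (- (real N * klb t b)) = b ^ k * (1 - b) ^ (N - k)"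
  proof -
    assume h: "exp (- (real N * klb t b)) = exp (- A) ^ k * exp (- B) ^ (N - k)"
    have e1: "t ^ k * exp (- A) ^ k = b ^ k" unfolding A_def
      using t0 b0 N0 by (intro pow_exp_aux) (auto simp: t_def)
    have e2: "(1 - t) ^ (N - k) * exp (- B) ^ (N - k) = (1 - b) ^ (N - k)" unfolding B_def
    proof (intro pow_exp_aux)
      assume "1 - t = 0" thus "N - k = 0" using N0 Nt1 by simp
    qed (use t1 b1 in auto)
    show ?thesis unfolding h using e1 e2 by (simp add: algebra_simps)
  qed
  have "real (N choose k) * b ^ k * (1 - b) ^ (N - k)
      = (real (N choose k) * t ^ k * (1 - t) ^ (N - k)) * exp (- (real N * klb t b))"
    using E by (simp add: algebra_simps)
  also have "\<dots> \<le> 1 * exp (- real N * eps)"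
  proof (intro mult_mono)
    show "real (N choose k) * t ^ k * (1 - t) ^ (N - k) \<le> 1" using t0 t1 kN by (rule types_le_1)
    show "exp (- (real N * klb t b)) \<le> exp (- real N * eps)"
      using kl N0 by (simp add: t_def)
  qed (use t0 t1 in auto)
  finally show ?thesis by simp
qed

lemma binom_tail:
  assumes b0: "0 \<le> b" and b1: "b \<le> 1" and N0: "N > 0"
  shows "measure (binomial_pmf N b) {k. real k / real N < b \<and> (b \<ge> 1 \<or> klb (real k / real N) b > eps)}
         \<le> real (N + 1) * exp (- real N * eps)"
proof -
  define S where "S = {k. real k / real N < b \<and> (b \<ge> 1 \<or> klb (real k / real N) b > eps)}"
  have sp: "set_pmf (binomial_pmf N b) \<subseteq> {..N}"
    using b0 b1 by (auto simp: set_pmf_binomial_eq)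
  have "measure (binomial_pmf N b) S = measure (binomial_pmf N b) (S \<inter> set_pmf (binomial_pmf N b))"
    by (simp add: measure_Int_set_pmf)
  also have "\<dots> \<le> measure (binomial_pmf N b) (S \<inter> {..N})"
    using sp by (intro measure_pmf.finite_measure_mono) auto
  also have "\<dots> = (\<Sum>k\<in>S \<inter> {..N}. pmf (binomial_pmf N b) k)"
    by (simp add: measure_measure_pmf_finite)
  also have "\<dots> \<le> (\<Sum>k\<in>S \<inter> {..N}. exp (- real N * eps))"
  proof (rule sum_mono)
    fix k assume k: "k \<in> S \<inter> {..N}"
    show "pmf (binomial_pmf N b) k \<le> exp (- real N * eps)"
    proof (cases "b \<ge> 1")
      case True
      hence "b = 1" using b1 by simp
      moreover have "k < N" using k N0 \<open>b = 1\<close> by (auto simp: S_def)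
      ultimately show ?thesis by (simp add: zero_power)
    next
      case False
      have "b > 0" using k N0 b0 by (auto simp: S_def intro: order.strict_trans1[rotated])
      moreover have "0 \<le> real k / real N" by simp
      ultimately show ?thesis using k False b0 b1 N0 binom_bound[of b k N eps]
        by (auto simp: S_def)
    qed
  qed
  also have "\<dots> \<le> (\<Sum>k\<in>{..N}. exp (- real N * eps))"
    by (intro sum_mono2) auto
  also have "\<dots> = real (N + 1) * exp (- real N * eps)" by simp
  finally show ?thesis by (simp add: S_def)
qed

lemma map_eq_bernoulli: "map_pmf (\<lambda>z. z = x) p = bernoulli_pmf (pmf p x)"
proof (rule pmf_eqI)
  fix c :: bool
  have v: "(\<lambda>z. z = x) -` {True} = {x}" "(\<lambda>z. z = x) -` {False} = UNIV - {x}" by auto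
  show "pmf (map_pmf (\<lambda>z. z = x) p) c = pmf (bernoulli_pmf (pmf p x)) c"
    using measure_pmf.prob_compl[of "{x}" p]
    by (cases c) (simp_all add: pmf_map v measure_pmf_single pmf_le_1)
qed

lemma count_binomial:
  "map_pmf (\<lambda>s. card {j\<in>{..<N}. s j = x}) (Pi_pmf {..<N} x (\<lambda>_. p)) = binomial_pmf N (pmf p x)"
proof -
  have "Pi_pmf {..<N} True (\<lambda>_. map_pmf (\<lambda>z. z = x) p) = map_pmf (\<lambda>h. (\<lambda>z. z = x) \<circ> h) (Pi_pmf {..<N} x (\<lambda>_. p))"
    by (rule Pi_pmf_map) auto
  hence "Pi_pmf {..<N} True (\<lambda>_. bernoulli_pmf (pmf p x)) = map_pmf (\<lambda>h. (\<lambda>z. z = x) \<circ> h) (Pi_pmf {..<N} x (\<lambda>_. p))"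
    by (simp add: map_eq_bernoulli)
  moreover have "binomial_pmf N (pmf p x) = map_pmf (\<lambda>f. card {j\<in>{..<N}. f j}) (Pi_pmf {..<N} True (\<lambda>_. bernoulli_pmf (pmf p x)))"
    by (rule binomial_pmf_altdef') (auto simp: pmf_le_1)
  ultimately show ?thesis by (simp add: pmf.map_comp o_def)
qed

lemma empirical_pmf:
  assumes "N > 0"
  shows "pmf (empirical N s) x = real (card {j\<in>{..<N}. s j = x}) / real N"
proof -
  have e: "{..<N} \<inter> s -` {x} = {j\<in>{..<N}. s j = x}" by auto
  have ne: "{..<N} \<noteq> {}" using assms by auto
  show ?thesis unfolding empirical_def pmf_map
    by (subst measure_pmf_of_set[OF ne]) (auto simp: e)
qed

lemma set_empirical:
  assumes "N > 0"
  shows "set_pmf (empirical N s) = s ` {..<N}"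
proof -
  have ne: "{..<N} \<noteq> {}" using assms by auto
  show ?thesis unfolding empirical_def by (simp add: set_pmf_of_set[OF ne])
qed

lemma class_bound:
  assumes N0: "N > 0"
  shows "measure (Pi_pmf {..<N} x (\<lambda>_. p))
     {s. pmf (empirical N s) x < pmf p x \<and> (pmf p x \<ge> 1 \<or> klb (pmf (empirical N s) x) (pmf p x) > eps)}
     \<le> real (N + 1) * exp (- real N * eps)"
proof -
  define b where "b = pmf p x"
  define cnt where "cnt = (\<lambda>s::nat \<Rightarrow> 'a. card {j\<in>{..<N}. s j = x})"
  have "{s. pmf (empirical N s) x < b \<and> (b \<ge> 1 \<or> klb (pmf (empirical N s) x) b > eps)}
      = cnt -` {k. real k / real N < b \<and> (b \<ge> 1 \<or> klb (real k / real N) b > eps)}"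
    using N0 by (auto simp: empirical_pmf cnt_def)
  hence "measure (Pi_pmf {..<N} x (\<lambda>_. p))
     {s. pmf (empirical N s) x < b \<and> (b \<ge> 1 \<or> klb (pmf (empirical N s) x) b > eps)}
     = measure (map_pmf cnt (Pi_pmf {..<N} x (\<lambda>_. p))) {k. real k / real N < b \<and> (b \<ge> 1 \<or> klb (real k / real N) b > eps)}"
    by simp
  also have "map_pmf cnt (Pi_pmf {..<N} x (\<lambda>_. p)) = binomial_pmf N b"
    unfolding cnt_def b_def by (rule count_binomial)
  also have "measure (binomial_pmf N b) {k. real k / real N < b \<and> (b \<ge> 1 \<or> klb (real k / real N) b > eps)}
     \<le> real (N + 1) * exp (- real N * eps)"
    using N0 by (intro binom_tail) (auto simp: b_def pmf_le_1)
  finally show ?thesis by (simp add: b_def)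
qed

lemma prob_bound:
  fixes X :: "'a set" and p :: "nat \<Rightarrow> 'a pmf"
  assumes sp: "\<And>i. i \<in> {1..C} \<Longrightarrow> set_pmf (p i) \<subseteq> X"
    and Qp: "\<And>q. q \<in> Q \<Longrightarrow> (\<forall>i\<in>{1..C}. q i \<ge> 0) \<and> (\<Sum>i\<in>{1..C}. q i) = 1"
    and xX: "x \<in> X"
    and ep: "\<And>i. i \<in> {1..C} \<Longrightarrow> \<epsilon> i > 0"
    and Np: "\<And>i. i \<in> {1..C} \<Longrightarrow> N i > 0"
  shows "measure_pmf.prob (sample_pmf C N p x)
                   {\<omega>. Jobj C Q prior (\<lambda>i. pmf (p i) x)
                        < Jobj C Q prior (\<lambda>i. Sup ((\<lambda>\<nu>. pmf \<nu> x) `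
                              KL_ball X (empirical (N i) (\<omega> i)) (\<epsilon> i)))}
         \<le> (\<Sum>i\<in>{1..C}. real (N i + 1) * exp (- real (N i) * \<epsilon> i))"
proof -
  define M where "M = sample_pmf C N p x"
  define E where "E = {\<omega>. Jobj C Q prior (\<lambda>i. pmf (p i) x)
                        < Jobj C Q prior (\<lambda>i. Sup ((\<lambda>\<nu>. pmf \<nu> x) `
                              KL_ball X (empirical (N i) (\<omega> i)) (\<epsilon> i)))}"
  define bad where "bad = (\<lambda>i s. pmf (empirical (N i) s) x < pmf (p i) x \<and>
      (pmf (p i) x \<ge> 1 \<or> klb (pmf (empirical (N i) s) x) (pmf (p i) x) > \<epsilon> i))"
  define P where "P = (\<lambda>i. Pi_pmf {..<N i} x (\<lambda>_. p i))"
  have M_eq: "M = Pi_pmf {1..C} (\<lambda>_. x) P" by (simp add: M_def P_def sample_pmf_def)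
  have sub: "E \<inter> set_pmf M \<subseteq> (\<Union>i\<in>{1..C}. {\<omega>. bad i (\<omega> i)})"
  proof (rule subsetI, rule ccontr)
    fix \<omega> assume w: "\<omega> \<in> E \<inter> set_pmf M" and nb: "\<omega> \<notin> (\<Union>i\<in>{1..C}. {\<omega>. bad i (\<omega> i)})"
    have ws: "\<omega> i \<in> set_pmf (P i)" if "i \<in> {1..C}" for i
      using w that unfolding M_eq by (auto simp: set_Pi_pmf PiE_dflt_def)
    have le: "pmf (p i) x \<le> Sup ((\<lambda>\<nu>. pmf \<nu> x) ` KL_ball X (empirical (N i) (\<omega> i)) (\<epsilon> i))"
      if i: "i \<in> {1..C}" for i
    proof (rule sup_ge[OF _ xX])
      show "set_pmf (empirical (N i) (\<omega> i)) \<subseteq> X"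
        using ws[OF i] sp[OF i] Np[OF i]
        by (auto simp: set_empirical P_def set_Pi_pmf PiE_dflt_def)
      show "0 \<le> \<epsilon> i" using ep[OF i] by simp
      show "\<not> (pmf (empirical (N i) (\<omega> i)) x < pmf (p i) x \<and>
          (1 \<le> pmf (p i) x \<or> \<epsilon> i < klb (pmf (empirical (N i) (\<omega> i)) x) (pmf (p i) x)))"
        using nb i by (auto simp: bad_def)
    qed
    have "Jobj C Q prior (\<lambda>i. Sup ((\<lambda>\<nu>. pmf \<nu> x) ` KL_ball X (empirical (N i) (\<omega> i)) (\<epsilon> i)))
        \<le> Jobj C Q prior (\<lambda>i. pmf (p i) x)"
      by (rule Jobj_anti) (use Qp le in auto)
    thus False using w by (auto simp: E_def)
  qed
  have "measure M E = measure M (E \<inter> set_pmf M)" by (simp add: measure_Int_set_pmf)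
  also have "\<dots> \<le> measure M (\<Union>i\<in>{1..C}. {\<omega>. bad i (\<omega> i)})"
    using sub by (intro measure_pmf.finite_measure_mono) auto
  also have "\<dots> \<le> (\<Sum>i\<in>{1..C}. measure M {\<omega>. bad i (\<omega> i)})"
    by (intro measure_pmf.finite_measure_subadditive_finite) auto
  also have "\<dots> \<le> (\<Sum>i\<in>{1..C}. real (N i + 1) * exp (- real (N i) * \<epsilon> i))"
  proof (rule sum_mono)
    fix i assume i: "i \<in> {1..C}"
    have "measure M {\<omega>. bad i (\<omega> i)} = measure (map_pmf (\<lambda>\<omega>. \<omega> i) M) {s. bad i s}"
      by simp
    also have "map_pmf (\<lambda>\<omega>. \<omega> i) M = P i"
      unfolding M_eq using i by (subst Pi_pmf_component) auto
    also have "measure (P i) {s. bad i s} \<le> real (N i + 1) * exp (- real (N i) * \<epsilon> i)"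
      unfolding P_def bad_def by (rule class_bound) (use Np[OF i] in simp)
    finally show "measure M {\<omega>. bad i (\<omega> i)} \<le> real (N i + 1) * exp (- real (N i) * \<epsilon> i)" .
  qed
  finally show ?thesis by (simp add: M_def E_def)
qed

lemma asym:
  assumes d: "d > 0"
  shows "\<exists>M::nat. M \<ge> 1 \<and> (\<forall>m\<ge>M. ln (real m + 1) \<le> d * real m \<and> ln (real C) / real m \<le> d)"
proof -
  have l1: "(\<lambda>m::nat. ln (real m + 1) / real m) \<longlonglongrightarrow> 0" by real_asymp
  have l2: "(\<lambda>m::nat. ln (real C) / real m) \<longlonglongrightarrow> 0"
    by real_asymp
  have "eventually (\<lambda>m::nat. ln (real m + 1) / real m < d \<and> ln (real C) / real m < d \<and> m \<ge> 1) sequentially"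
    using order_tendstoD(2)[OF l1 d] order_tendstoD(2)[OF l2 d] eventually_ge_at_top[of "1::nat"]
    by eventually_elim auto
  then obtain M where M: "\<And>m. m \<ge> M \<Longrightarrow> ln (real m + 1) / real m < d \<and> ln (real C) / real m < d \<and> m \<ge> 1"
    by (auto simp: eventually_sequentially)
  show ?thesis
  proof (intro exI[of _ "max M 1"] conjI allI impI)
    fix m assume m: "max M 1 \<le> m"
    hence mp: "real m > 0" by simp
    from M[of m] m have h: "ln (real m + 1) / real m < d" "ln (real C) / real m < d" by auto
    show "ln (real C) / real m \<le> d" using h by simp
    show "ln (real m + 1) \<le> d * real m" using h(1) mp by (simp add: divide_less_eq)
  qed simp
qed

theorem mainTheorem8:
  fixes X :: "(real ^ 'm) set"
    and C :: nat
    and p :: "nat \<Rightarrow> (real ^ 'm) pmf"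
    and prior :: "nat \<Rightarrow> real"
    and Q :: "(nat \<Rightarrow> real) set"
    and x :: "real ^ 'm"
    and \<epsilon> :: "nat \<Rightarrow> real"
  assumes "countable X"
    and "C \<ge> 2"
    and "\<And>i. i \<in> {1..C} \<Longrightarrow> set_pmf (p i) \<subseteq> X"
    and "\<And>i. i \<in> {1..C} \<Longrightarrow> prior i \<ge> 0"
    and "(\<Sum>i\<in>{1..C}. prior i) = 1"
    and "\<And>q. q \<in> Q \<Longrightarrow> (\<forall>i\<in>{1..C}. q i \<ge> 0) \<and> (\<Sum>i\<in>{1..C}. q i) = 1"
    and "x \<in> X"
    and "\<And>i. i \<in> {1..C} \<Longrightarrow> \<epsilon> i > 0"
  shows "Limsup (filtercomap (\<lambda>N. Min (N ` {1..C})) at_top)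
           (\<lambda>N. ereal (1 / real (Min (N ` {1..C}))) *
                 elog (measure_pmf.prob (sample_pmf C N p x)
                   {\<omega>. Jobj C Q prior (\<lambda>i. pmf (p i) x)
                        < Jobj C Q prior (\<lambda>i. Sup ((\<lambda>\<nu>. pmf \<nu> x) `
                              KL_ball X (empirical (N i) (\<omega> i)) (\<epsilon> i)))}))
         \<le> - ereal (Min (\<epsilon> ` {1..C}))
       \<and> - Min (\<epsilon> ` {1..C}) < 0"
proof -
  note sp = assms(3) and Qp = assms(6) and xX = assms(7) and ep = assms(8)
  define e where "e = Min (\<epsilon> ` {1..C})"
  have fin: "finite {1..C}" and ne: "{1..C} \<noteq> {}" using assms(2) by auto
  have e_le: "e \<le> \<epsilon> i" if "i \<in> {1..C}" for i using fin that by (simp add: e_def)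
  have e0: "e > 0"
  proof -
    have "e \<in> \<epsilon> ` {1..C}" unfolding e_def using fin ne by (intro Min_in) auto
    thus ?thesis using ep by auto
  qed
  have C1: "real C \<ge> 1" using assms(2) by simp
  define F where "F = (\<lambda>N. ereal (1 / real (Min (N ` {1..C}))) *
                 elog (measure_pmf.prob (sample_pmf C N p x)
                   {\<omega>. Jobj C Q prior (\<lambda>i. pmf (p i) x)
                        < Jobj C Q prior (\<lambda>i. Sup ((\<lambda>\<nu>. pmf \<nu> x) `
                              KL_ball X (empirical (N i) (\<omega> i)) (\<epsilon> i)))}))"
  have "Limsup (filtercomap (\<lambda>N. Min (N ` {1..C})) at_top) F \<le> - ereal e"
  proof (rule ereal_le_epsilon2)
    fix \<delta> :: real assume \<delta>: "\<delta> > 0"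
    define d where "d = min \<delta> e"
    have d0: "d > 0" and d_le: "d \<le> \<delta>" "d \<le> e" using \<delta> e0 by (auto simp: d_def)
    obtain M :: nat where M1: "M \<ge> 1"
      and M: "\<And>m. m \<ge> M \<Longrightarrow> ln (real m + 1) \<le> d / 2 * real m \<and> ln (real C) / real m \<le> d / 2"
      using asym[of "d/2" C] d0 by auto
    show "Limsup (filtercomap (\<lambda>N. Min (N ` {1..C})) at_top) F \<le> - ereal e + ereal \<delta>"
    proof (rule Limsup_bounded, unfold eventually_filtercomap_at_top_linorder, intro exI[of _ M] allI impI)
      fix N :: "nat \<Rightarrow> nat" assume nM: "M \<le> Min (N ` {1..C})"
      define n where "n = Min (N ` {1..C})"
      have n_le: "n \<le> N i" if "i \<in> {1..C}" for i using fin that by (simp add: n_def)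
      have n1: "n \<ge> 1" using nM M1 by (simp add: n_def)
      define P where "P = measure_pmf.prob (sample_pmf C N p x)
                   {\<omega>. Jobj C Q prior (\<lambda>i. pmf (p i) x)
                        < Jobj C Q prior (\<lambda>i. Sup ((\<lambda>\<nu>. pmf \<nu> x) `
                              KL_ball X (empirical (N i) (\<omega> i)) (\<epsilon> i)))}"
      have "P \<le> (\<Sum>i\<in>{1..C}. real (N i + 1) * exp (- real (N i) * \<epsilon> i))"
        unfolding P_def
      proof (rule prob_bound[OF sp Qp xX ep])
        fix i assume "i \<in> {1..C}" thus "N i > 0" using n_le[of i] n1 by simp
      qed auto
      also have "\<dots> \<le> (\<Sum>i\<in>{1..C}. exp (- real n * (e - d / 2)))"
      proof (rule sum_mono)
        fix i assume i: "i \<in> {1..C}"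
        have Ni: "N i \<ge> M" using n_le[OF i] nM by (simp add: n_def)
        have "ln (real (N i) + 1) \<le> d / 2 * real (N i)" using M[OF Ni] by simp
        hence "exp (ln (real (N i) + 1)) \<le> exp (d / 2 * real (N i))" by (subst exp_le_cancel_iff)
        moreover have "exp (ln (real (N i) + 1)) = real (N i) + 1" by (rule exp_ln) simp
        ultimately have t1: "real (N i + 1) \<le> exp (d / 2 * real (N i))" by simp
        have "real (N i + 1) * exp (- real (N i) * \<epsilon> i) \<le> exp (d / 2 * real (N i)) * exp (- real (N i) * \<epsilon> i)"
          using t1 by (intro mult_right_mono) auto
        also have "\<dots> = exp (d / 2 * real (N i) - real (N i) * \<epsilon> i)" by (simp add: exp_add[symmetric])
        also have "\<dots> \<le> exp (- real n * (e - d / 2))"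
        proof -
          have a1: "real (N i) * e \<le> real (N i) * \<epsilon> i" using e_le[OF i] by (intro mult_left_mono) auto
          have a2: "real n * (e - d / 2) \<le> real (N i) * (e - d / 2)"
            using n_le[OF i] d_le d0 by (intro mult_right_mono) auto
          have "d / 2 * real (N i) - real (N i) * \<epsilon> i \<le> - real n * (e - d / 2)"
            using a1 a2 by (simp add: algebra_simps)
          thus ?thesis by simp
        qed
        finally show "real (N i + 1) * exp (- real (N i) * \<epsilon> i) \<le> exp (- real n * (e - d / 2))" .
      qed
      also have "\<dots> = real C * exp (- real n * (e - d / 2))" by simp
      finally have PB: "P \<le> real C * exp (- real n * (e - d / 2))" .
      have np: "real n > 0" using n1 by simp
      have "ereal (1 / real n) * elog P \<le> ereal (- e + \<delta>)"
      proof (cases "P > 0")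
        case False
        thus ?thesis using np by (simp add: elog_def)
      next
        case True
        have "ln P \<le> ln (real C * exp (- real n * (e - d / 2)))"
          using PB True by (subst ln_le_cancel_iff) auto
        also have "\<dots> = ln (real C) - real n * (e - d / 2)" using C1 by (simp add: ln_mult)
        finally have "ln P / real n \<le> (ln (real C) - real n * (e - d / 2)) / real n"
          using np by (intro divide_right_mono) auto
        also have "\<dots> = ln (real C) / real n - (e - d / 2)" using np by (simp add: field_simps)
        also have "\<dots> \<le> d / 2 - (e - d / 2)"
        proof -
          have "M \<le> n" using nM by (simp add: n_def)
          hence "ln (real C) / real n \<le> d / 2" using M by blast
          thus ?thesis by linarith
        qed
        also have "\<dots> \<le> - e + \<delta>" using d_le by simp
        finally have "ln P / real n \<le> - e + \<delta>" .
        thus ?thesis using True by (simp add: elog_def)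
      qed
      thus "F N \<le> - ereal e + ereal \<delta>" by (simp add: F_def P_def n_def)
    qed
  qed
  moreover have "- Min (\<epsilon> ` {1..C}) < 0" using e0 by (simp add: e_def)
  ultimately show ?thesis by (simp add: F_def e_def)
qed

end
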